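(* Let $n\ge2$, $\alpha,\beta>0$, $a=1/\alpha$, $b=1/\beta$, and let $1\le j_1<\dots<j_r\le n-1$. For $1\le j\le n-1$ let $x_j$ be the event that box $(n-j,j)$ (on the second main diagonal) is non-empty. If $j_k\le j_{k+1}-2$ for all $k=1,\dots,r-1$, then \[\mathbb{P}_{n,\alpha,\beta}(x_{j_1},\dots,x_{j_r})=\prod_{k=1}^{r}\frac{1}{n+a+b-r+k-1}.\] Otherwise, $\mathbb{P}_{n,\alpha,\beta}(x_{j_1},\dots,x_{j_r})=0$.
   Context: A staircase tableau of size $n$ has boxes $(i,j)$ with $i,j\ge1$ and $i+j\le n+1$, rows numbered from the top and columns from the left. An $\alpha/\beta$-staircase tableau of size $n$ is a filling in which each box is empty or contains $\alpha$ or $\beta$, such that: all boxes in the same column and above an $\alpha$ are empty; all boxes in the same row and to the left of a $\beta$ are empty; every main-diagonal box (with $i+j=n+1$) contains a symbol. $\overline{\mathcal{S}}_n$ is the set of these. The weight is $wt(S)=\alpha^{N_\alpha}\beta^{N_\beta}$ ($N_\alpha,N_\beta$ the numbers of $\alpha$'s, $\beta$'s), and $\mathbb{P}_{n,\alpha,\beta}(S)=wt(S)/\sum_{T\in\overline{\mathcal{S}}_n}wt(T)$. $\mathbb{P}_{n,\alpha,\beta}(E_1,\dots,E_r)$ denotes the probability of the intersection of the events. *)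

theory Defs
  imports Complex_Main
begin

datatype cell = Empty | Alpha | Beta

text \<open>Boxes of the staircase of size n: (i,j) with i,j \<ge> 1 and i+j \<le> n+1
  (row i from the top, column j from the left).\<close>
definition box :: "nat \<Rightarrow> nat \<times> nat \<Rightarrow> bool" where
  "box n p \<longleftrightarrow> 1 \<le> fst p \<and> 1 \<le> snd p \<and> fst p + snd p \<le> n + 1"

definition stair_tableaux :: "nat \<Rightarrow> (nat \<times> nat \<Rightarrow> cell) set" where
  "stair_tableaux n = {S.
     (\<forall>p. \<not> box n p \<longrightarrow> S p = Empty) \<and>
     (\<comment> \<open>boxes in the same column above an alpha are empty\<close>
      \<forall>i j i'. box n (i,j) \<and> S (i,j) = Alpha \<and> 1 \<le> i' \<and> i' < i \<longrightarrow> S (i',j) = Empty) \<and>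
     (\<comment> \<open>boxes in the same row left of a beta are empty\<close>
      \<forall>i j j'. box n (i,j) \<and> S (i,j) = Beta \<and> 1 \<le> j' \<and> j' < j \<longrightarrow> S (i,j') = Empty) \<and>
     (\<comment> \<open>main-diagonal boxes are filled\<close>
      \<forall>i j. 1 \<le> i \<and> 1 \<le> j \<and> i + j = n + 1 \<longrightarrow> S (i,j) \<noteq> Empty)}"

definition boxes :: "nat \<Rightarrow> (nat \<times> nat) set" where
  "boxes n = {p. box n p}"

definition N_alpha :: "nat \<Rightarrow> (nat \<times> nat \<Rightarrow> cell) \<Rightarrow> nat" where
  "N_alpha n S = card {p \<in> boxes n. S p = Alpha}"

definition N_beta :: "nat \<Rightarrow> (nat \<times> nat \<Rightarrow> cell) \<Rightarrow> nat" where
  "N_beta n S = card {p \<in> boxes n. S p = Beta}"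

definition wt :: "nat \<Rightarrow> real \<Rightarrow> real \<Rightarrow> (nat \<times> nat \<Rightarrow> cell) \<Rightarrow> real" where
  "wt n \<alpha> \<beta> S = \<alpha> ^ N_alpha n S * \<beta> ^ N_beta n S"

definition Prob :: "nat \<Rightarrow> real \<Rightarrow> real \<Rightarrow> ((nat \<times> nat \<Rightarrow> cell) \<Rightarrow> bool) \<Rightarrow> real" where
  "Prob n \<alpha> \<beta> E =
     (\<Sum>S\<in>{S \<in> stair_tableaux n. E S}. wt n \<alpha> \<beta> S) / (\<Sum>S\<in>stair_tableaux n. wt n \<alpha> \<beta> S)"

definition x_event :: "nat \<Rightarrow> nat \<Rightarrow> (nat \<times> nat \<Rightarrow> cell) \<Rightarrow> bool" where
  "x_event n j S \<longleftrightarrow> S (n - j, j) \<noteq> Empty"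

end

theory Submission
  imports Defs
begin


lemma ST_iff: "S \<in> stair_tableaux n \<longleftrightarrow>
     (\<forall>p. \<not> box n p \<longrightarrow> S p = Empty) \<and>
     (\<forall>i j i'. box n (i,j) \<and> S (i,j) = Alpha \<and> 1 \<le> i' \<and> i' < i \<longrightarrow> S (i',j) = Empty) \<and>
     (\<forall>i j j'. box n (i,j) \<and> S (i,j) = Beta \<and> 1 \<le> j' \<and> j' < j \<longrightarrow> S (i,j') = Empty) \<and>
     (\<forall>i j. 1 \<le> i \<and> 1 \<le> j \<and> i + j = n + 1 \<longrightarrow> S (i,j) \<noteq> Empty)"
  unfolding stair_tableaux_def by simp

lemma box_iff: "box n (i,j) \<longleftrightarrow> 1 \<le> i \<and> 1 \<le> j \<and> i + j \<le> n + 1"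
  unfolding box_def by simp

lemma ST_box: "S \<in> stair_tableaux n \<Longrightarrow> S q \<noteq> Empty \<Longrightarrow> box n q"
  unfolding stair_tableaux_def by blast

lemma ST_out: "S \<in> stair_tableaux n \<Longrightarrow> \<not> box n q \<Longrightarrow> S q = Empty"
  unfolding stair_tableaux_def by blast

lemma ST_alpha: "S \<in> stair_tableaux n \<Longrightarrow> S (i,j) = Alpha \<Longrightarrow> 1 \<le> i' \<Longrightarrow> i' < i \<Longrightarrow> S (i',j) = Empty"
proof -
  assume h: "S \<in> stair_tableaux n" "S (i,j) = Alpha" "1 \<le> i'" "i' < i"
  then have "box n (i,j)" using ST_box[of S n "(i,j)"] by simp
  with h show ?thesis unfolding stair_tableaux_def by blast
qed

lemma ST_beta: "S \<in> stair_tableaux n \<Longrightarrow> S (i,j) = Beta \<Longrightarrow> 1 \<le> j' \<Longrightarrow> j' < j \<Longrightarrow> S (i,j') = Empty"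
proof -
  assume h: "S \<in> stair_tableaux n" "S (i,j) = Beta" "1 \<le> j'" "j' < j"
  then have "box n (i,j)" using ST_box[of S n "(i,j)"] by simp
  with h show ?thesis unfolding stair_tableaux_def by blast
qed

lemma ST_diag: "S \<in> stair_tableaux n \<Longrightarrow> 1 \<le> i \<Longrightarrow> 1 \<le> j \<Longrightarrow> i + j = n + 1 \<Longrightarrow> S (i,j) \<noteq> Empty"
  unfolding stair_tableaux_def by blast

lemma finite_boxes: "finite (boxes n)"
proof -
  have "boxes n \<subseteq> {0..n+1} \<times> {0..n+1}" unfolding boxes_def box_def by auto
  then show ?thesis by (rule finite_subset) auto
qed

lemma fin_cell: "finite (UNIV :: cell set)"
proof -
  have "(UNIV :: cell set) = {Empty, Alpha, Beta}" using cell.exhaust by blast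
  then show ?thesis by (metis finite.emptyI finite_insert)
qed

lemma finite_ST: "finite (stair_tableaux n)"
proof -
  have f: "finite {f. \<forall>x. (x \<in> boxes n \<longrightarrow> f x \<in> (UNIV::cell set)) \<and> (x \<notin> boxes n \<longrightarrow> f x = Empty)}"
    by (rule finite_set_of_finite_funs[OF finite_boxes fin_cell])
  show ?thesis
    by (rule finite_subset[OF _ f]) (auto simp: stair_tableaux_def boxes_def)
qed

definition cA :: "(nat \<times> nat \<Rightarrow> cell) \<Rightarrow> nat" where "cA S = card {q. S q = Alpha}"
definition cB :: "(nat \<times> nat \<Rightarrow> cell) \<Rightarrow> nat" where "cB S = card {q. S q = Beta}"

lemma NA_cA: "S \<in> stair_tableaux n \<Longrightarrow> N_alpha n S = cA S"
proof -
  assume h: "S \<in> stair_tableaux n"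
  have "{p \<in> boxes n. S p = Alpha} = {q. S q = Alpha}"
    using ST_box[OF h] unfolding boxes_def by force
  then show ?thesis unfolding N_alpha_def cA_def by simp
qed

lemma NB_cB: "S \<in> stair_tableaux n \<Longrightarrow> N_beta n S = cB S"
proof -
  assume h: "S \<in> stair_tableaux n"
  have "{p \<in> boxes n. S p = Beta} = {q. S q = Beta}"
    using ST_box[OF h] unfolding boxes_def by force
  then show ?thesis unfolding N_beta_def cB_def by simp
qed

lemma finA: "S \<in> stair_tableaux n \<Longrightarrow> finite {q. S q = Alpha}"
proof -
  assume h: "S \<in> stair_tableaux n"
  have "{q. S q = Alpha} \<subseteq> boxes n"
  proof
    fix q assume "q \<in> {q. S q = Alpha}"
    then have "S q \<noteq> Empty" by simp
    then show "q \<in> boxes n" using ST_box[OF h] unfolding boxes_def by blast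
  qed
  then show ?thesis using finite_subset finite_boxes by blast
qed
lemma finB: "S \<in> stair_tableaux n \<Longrightarrow> finite {q. S q = Beta}"
proof -
  assume h: "S \<in> stair_tableaux n"
  have "{q. S q = Beta} \<subseteq> boxes n"
  proof
    fix q assume "q \<in> {q. S q = Beta}"
    then have "S q \<noteq> Empty" by simp
    then show "q \<in> boxes n" using ST_box[OF h] unfolding boxes_def by blast
  qed
  then show ?thesis using finite_subset finite_boxes by blast
qed

definition W :: "nat \<Rightarrow> real \<Rightarrow> real \<Rightarrow> ((nat \<times> nat \<Rightarrow> cell) \<Rightarrow> bool) \<Rightarrow> real" where
  "W n a b P = (\<Sum>S\<in>{S \<in> stair_tableaux n. P S}. wt n a b S)"

lemma W_split: "W n a b P = W n a b (\<lambda>S. P S \<and> Q S) + W n a b (\<lambda>S. P S \<and> \<not> Q S)"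
proof -
  have e: "{S \<in> stair_tableaux n. P S} = {S \<in> stair_tableaux n. P S \<and> Q S} \<union> {S \<in> stair_tableaux n. P S \<and> \<not> Q S}" by blast
  show ?thesis unfolding W_def e
    by (rule sum.union_disjoint) (use finite_ST in auto)
qed

lemma W_cong: "(\<And>S. S \<in> stair_tableaux n \<Longrightarrow> P S = Q S) \<Longrightarrow> W n a b P = W n a b Q"
  unfolding W_def by (rule sum.cong) auto

lemma W_false: "(\<And>S. S \<in> stair_tableaux n \<Longrightarrow> \<not> P S) \<Longrightarrow> W n a b P = 0"
  unfolding W_def by (rule sum.neutral) auto

lemma W_reindex:
  assumes exp: "\<And>S'. S' \<in> stair_tableaux m \<Longrightarrow> Q' S' \<Longrightarrow> ex S' \<in> stair_tableaux n \<and> Q (ex S') \<and> co (ex S') = S'"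
    and co: "\<And>S. S \<in> stair_tableaux n \<Longrightarrow> Q S \<Longrightarrow> co S \<in> stair_tableaux m \<and> Q' (co S) \<and> ex (co S) = S"
    and cnt: "\<And>S'. S' \<in> stair_tableaux m \<Longrightarrow> Q' S' \<Longrightarrow> cA (ex S') = cA S' + da \<and> cB (ex S') = cB S' + db"
  shows "W n a b (\<lambda>S. Q S \<and> P S) = a ^ da * b ^ db * W m a b (\<lambda>S'. Q' S' \<and> P (ex S'))"
proof -
  let ?A = "{S' \<in> stair_tableaux m. Q' S' \<and> P (ex S')}"
  have img: "{S \<in> stair_tableaux n. Q S \<and> P S} = ex ` ?A"
  proof
    show "{S \<in> stair_tableaux n. Q S \<and> P S} \<subseteq> ex ` ?A"
    proof
      fix S assume "S \<in> {S \<in> stair_tableaux n. Q S \<and> P S}"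
      then have "S \<in> stair_tableaux n" "Q S" "P S" by auto
      with co[of S] have "co S \<in> ?A" "S = ex (co S)" by auto
      then show "S \<in> ex ` ?A" by blast
    qed
    show "ex ` ?A \<subseteq> {S \<in> stair_tableaux n. Q S \<and> P S}" using exp by auto
  qed
  have inj: "inj_on ex ?A"
    by (rule inj_onI) (metis (no_types, lifting) exp mem_Collect_eq)
  have "W n a b (\<lambda>S. Q S \<and> P S) = (\<Sum>S'\<in>?A. wt n a b (ex S'))"
    unfolding W_def img by (rule sum.reindex[OF inj, unfolded comp_def])
  also have "\<dots> = (\<Sum>S'\<in>?A. a ^ da * b ^ db * wt m a b S')"
  proof (rule sum.cong)
    fix S' assume "S' \<in> ?A"
    then have h: "S' \<in> stair_tableaux m" "Q' S'" by auto
    then have "ex S' \<in> stair_tableaux n" using exp by blast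
    then show "wt n a b (ex S') = a ^ da * b ^ db * wt m a b S'"
      using cnt[OF h] h unfolding wt_def by (simp add: NA_cA NB_cB power_add)
  qed simp
  also have "\<dots> = a ^ da * b ^ db * W m a b (\<lambda>S'. Q' S' \<and> P (ex S'))"
    unfolding W_def by (simp add: sum_distrib_left)
  finally show ?thesis .
qed



definition inc :: "nat \<Rightarrow> nat \<Rightarrow> nat" where "inc r i = (if i < r then i else Suc i)"
definition dec :: "nat \<Rightarrow> nat \<Rightarrow> nat" where "dec r i = (if i < r then i else i - 1)"
definition pm :: "nat \<Rightarrow> nat \<Rightarrow> nat \<times> nat \<Rightarrow> nat \<times> nat" where
  "pm r c q = (inc r (fst q), inc c (snd q))"

lemma inc_inj: "inc r a = inc r b \<longleftrightarrow> a = b" by (auto simp: inc_def)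
lemma pm_inj: "inj (pm r c)" by (rule injI) (auto simp: pm_def inc_inj prod_eq_iff)
lemma dec_inc[simp]: "dec r (inc r i) = i" by (auto simp: inc_def dec_def)
lemma inc_dec: "i \<noteq> r \<Longrightarrow> inc r (dec r i) = i" by (auto simp: inc_def dec_def)
lemma inc_ne[simp]: "inc r i \<noteq> r" by (auto simp: inc_def)
lemma inc_ne'[simp]: "r \<noteq> inc r i" by (auto simp: inc_def)

lemma card_ins_img:
  assumes "finite A" "x \<notin> pm r c ` A"
  shows "card (insert x (pm r c ` A)) = card A + 1"
  using assms by (simp add: card_image pm_inj inj_on_subset[OF pm_inj])

lemma card_img: "finite A \<Longrightarrow> card (pm r c ` A) = card A"
  by (simp add: card_image inj_on_subset[OF pm_inj])

section \<open>Contraction at second-diagonal box (n-j, j)\<close>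

definition conX :: "nat \<Rightarrow> nat \<Rightarrow> (nat \<times> nat \<Rightarrow> cell) \<Rightarrow> (nat \<times> nat \<Rightarrow> cell)" where
  "conX n j S = (\<lambda>q. S (pm (n-j+1) (j+1) q))"

definition expX :: "nat \<Rightarrow> nat \<Rightarrow> (nat \<times> nat \<Rightarrow> cell) \<Rightarrow> (nat \<times> nat \<Rightarrow> cell)" where
  "expX n j S' = (\<lambda>q. if q = (n-j+1, j) then Beta else if q = (n-j, j+1) then Alpha
      else if fst q = n-j+1 \<or> snd q = j+1 then Empty else S' (dec (n-j+1) (fst q), dec (j+1) (snd q)))"

lemma expX_app: "expX n j S' (i,k) = (if i = n-j+1 \<and> k = j then Beta else if i = n-j \<and> k = j+1 then Alpha
      else if i = n-j+1 \<or> k = j+1 then Empty else S' (dec (n-j+1) i, dec (j+1) k))"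
  unfolding expX_def by simp

lemma conX_app: "conX n j S (i,k) = S (inc (n-j+1) i, inc (j+1) k)"
  unfolding conX_def pm_def by simp

context
  fixes n j :: nat
  assumes j1: "1 \<le> j" and jn: "j < n"
begin

lemma expX_ST:
  assumes S': "S' \<in> stair_tableaux (n-1)"
  shows "expX n j S' \<in> stair_tableaux n"
  unfolding ST_iff
proof (intro conjI allI impI)
  fix q assume nb: "\<not> box n q"
  obtain i k where q: "q = (i,k)" by force
  show "expX n j S' q = Empty"
  proof (cases "i = n-j+1 \<or> k = j+1")
    case True then show ?thesis using nb j1 jn unfolding q expX_app by (auto simp: box_iff)
  next
    case False
    have "\<not> box (n-1) (dec (n-j+1) i, dec (j+1) k)"
      using nb False j1 jn unfolding q box_iff dec_def by auto
    then show ?thesis using False ST_out[OF S'] unfolding q expX_app by auto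
  qed
next
  fix i k i' assume h: "box n (i,k) \<and> expX n j S' (i,k) = Alpha \<and> 1 \<le> i' \<and> i' < i"
  show "expX n j S' (i',k) = Empty"
  proof (cases "i = n-j \<and> k = j+1")
    case True then show ?thesis using h j1 jn unfolding expX_app by auto
  next
    case False
    then have nr: "i \<noteq> n-j+1" "k \<noteq> j+1" and a: "S' (dec (n-j+1) i, dec (j+1) k) = Alpha"
      using h unfolding expX_app by (auto split: if_splits)
    have "S' (dec (n-j+1) i', dec (j+1) k) = Empty"
      by (rule ST_alpha[OF S' a]) (use h nr j1 jn in \<open>auto simp: dec_def\<close>)
    then show ?thesis using h nr j1 jn unfolding expX_app box_iff by auto
  qed
next
  fix i k k' assume h: "box n (i,k) \<and> expX n j S' (i,k) = Beta \<and> 1 \<le> k' \<and> k' < k"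
  show "expX n j S' (i,k') = Empty"
  proof (cases "i = n-j+1 \<and> k = j")
    case True then show ?thesis using h j1 jn unfolding expX_app by auto
  next
    case False
    then have nr: "i \<noteq> n-j+1" "k \<noteq> j+1" and a: "S' (dec (n-j+1) i, dec (j+1) k) = Beta"
      using h unfolding expX_app by (auto split: if_splits)
    have "S' (dec (n-j+1) i, dec (j+1) k') = Empty"
      by (rule ST_beta[OF S' a]) (use h nr j1 jn in \<open>auto simp: dec_def\<close>)
    then show ?thesis using h nr j1 jn unfolding expX_app box_iff by auto
  qed
next
  fix i k assume h: "1 \<le> i \<and> 1 \<le> k \<and> i + k = n + 1"
  show "expX n j S' (i,k) \<noteq> Empty"
  proof (cases "i = n-j+1 \<or> k = j+1")
    case True then show ?thesis using h j1 jn unfolding expX_app by auto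
  next
    case False
    have "S' (dec (n-j+1) i, dec (j+1) k) \<noteq> Empty"
      by (rule ST_diag[OF S']) (use h False j1 jn in \<open>auto simp: dec_def\<close>)
    then show ?thesis using False unfolding expX_app by auto
  qed
qed

lemma conX_ST:
  assumes S: "S \<in> stair_tableaux n" and X: "S (n-j, j) \<noteq> Empty"
  shows "conX n j S \<in> stair_tableaux (n-1)"
  unfolding ST_iff
proof (intro conjI allI impI)
  fix q assume nb: "\<not> box (n-1) q"
  obtain i k where q: "q = (i,k)" by force
  have "\<not> box n (inc (n-j+1) i, inc (j+1) k)"
    using nb j1 jn unfolding q box_iff inc_def by auto
  then show "conX n j S q = Empty" unfolding q conX_app using ST_out[OF S] by blast
next
  fix i k i' assume h: "box (n-1) (i,k) \<and> conX n j S (i,k) = Alpha \<and> 1 \<le> i' \<and> i' < i"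
  show "conX n j S (i',k) = Empty" unfolding conX_app
    by (rule ST_alpha[OF S, of "inc (n-j+1) i"]) (use h in \<open>auto simp: conX_app inc_def\<close>)
next
  fix i k k' assume h: "box (n-1) (i,k) \<and> conX n j S (i,k) = Beta \<and> 1 \<le> k' \<and> k' < k"
  show "conX n j S (i,k') = Empty" unfolding conX_app
    by (rule ST_beta[OF S, of _ "inc (j+1) k"]) (use h in \<open>auto simp: conX_app inc_def\<close>)
next
  fix i k assume h: "1 \<le> i \<and> 1 \<le> k \<and> i + k = n - 1 + 1"
  show "conX n j S (i,k) \<noteq> Empty"
  proof (cases "i < n-j+1 \<and> k < j+1")
    case True
    then have "i = n-j" "k = j" using h jn by auto
    then show ?thesis using X True unfolding conX_app inc_def by simp
  next
    case False
    show ?thesis unfolding conX_app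
      by (rule ST_diag[OF S]) (use h False j1 jn in \<open>auto simp: inc_def\<close>)
  qed
qed

lemma conX_expX: "conX n j (expX n j S') = S'"
  by (rule ext) (auto simp: conX_def expX_def pm_def)

lemma expX_conX:
  assumes S: "S \<in> stair_tableaux n" and X: "S (n-j, j) \<noteq> Empty"
  shows "expX n j (conX n j S) = S"
proof -
  have D: "S (n-j+1, j) = Beta"
  proof -
    have "S (n-j+1, j) \<noteq> Empty" by (rule ST_diag[OF S]) (use j1 jn in auto)
    moreover have "S (n-j+1, j) \<noteq> Alpha"
    proof
      assume "S (n-j+1, j) = Alpha"
      moreover have "1 \<le> n-j" "n-j < n-j+1" using jn by auto
      ultimately have "S (n-j, j) = Empty" using ST_alpha[OF S] by blast
      then show False using X by simp
    qed
    ultimately show ?thesis by (cases "S (n-j+1, j)") auto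
  qed
  have R: "S (n-j, j+1) = Alpha"
  proof -
    have "S (n-j, j+1) \<noteq> Empty" by (rule ST_diag[OF S]) (use j1 jn in auto)
    moreover have "S (n-j, j+1) \<noteq> Beta"
      using ST_beta[OF S, of "n-j" "j+1" j] X j1 jn by auto
    ultimately show ?thesis by (cases "S (n-j, j+1)") auto
  qed
  show ?thesis
  proof (rule ext)
    fix q :: "nat \<times> nat"
    obtain i k where q: "q = (i,k)" by force
    show "expX n j (conX n j S) q = S q"
    proof (cases "i = n-j+1 \<or> k = j+1")
      case False
      then show ?thesis unfolding q expX_app conX_app by (auto simp: inc_dec)
    next
      case True
      show ?thesis
      proof (cases "(i,k) = (n-j+1, j) \<or> (i,k) = (n-j, j+1)")
        case True
        then show ?thesis using D R unfolding q expX_app by auto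
      next
        case False
        have "S (i,k) = Empty"
        proof (cases "i = n-j+1")
          case True
          with False have kj: "k \<noteq> j" by auto
          show ?thesis
          proof (cases "1 \<le> k \<and> k < j")
            case True then show ?thesis using ST_beta[OF S D] \<open>i = n-j+1\<close> by auto
          next
            case False then show ?thesis using ST_out[OF S] kj \<open>i = n-j+1\<close> j1 jn by (auto simp: box_iff)
          qed
        next
          case False
          with \<open>i = n-j+1 \<or> k = j+1\<close> have kc: "k = j+1" by auto
          with \<open>\<not> ((i,k) = (n-j+1, j) \<or> (i,k) = (n-j, j+1))\<close> have "i \<noteq> n-j" by auto
          show ?thesis
          proof (cases "1 \<le> i \<and> i < n-j")
            case True then show ?thesis using ST_alpha[OF S R] kc by auto
          next
            case False then show ?thesis using ST_out[OF S] kc \<open>i \<noteq> n-j\<close> j1 jn by (auto simp: box_iff)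
          qed
        qed
        then show ?thesis using True False unfolding q expX_app by auto
      qed
    qed
  qed
qed

lemma expX_alpha: "{q. expX n j S' q = Alpha} = insert (n-j, j+1) (pm (n-j+1) (j+1) ` {q. S' q = Alpha})"
proof (rule set_eqI)
  fix q :: "nat \<times> nat"
  obtain i k where q: "q = (i,k)" by force
  show "q \<in> {q. expX n j S' q = Alpha} \<longleftrightarrow> q \<in> insert (n-j, j+1) (pm (n-j+1) (j+1) ` {q. S' q = Alpha})"
  proof
    assume "q \<in> {q. expX n j S' q = Alpha}"
    then have "expX n j S' (i,k) = Alpha" using q by simp
    then have "(i,k) = (n-j, j+1) \<or> (i \<noteq> n-j+1 \<and> k \<noteq> j+1 \<and> S' (dec (n-j+1) i, dec (j+1) k) = Alpha)"
      unfolding expX_app by (auto split: if_splits)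
    then show "q \<in> insert (n-j, j+1) (pm (n-j+1) (j+1) ` {q. S' q = Alpha})"
    proof
      assume h: "i \<noteq> n-j+1 \<and> k \<noteq> j+1 \<and> S' (dec (n-j+1) i, dec (j+1) k) = Alpha"
      then have "q = pm (n-j+1) (j+1) (dec (n-j+1) i, dec (j+1) k)" unfolding q pm_def by (simp add: inc_dec)
      then show ?thesis using h by blast
    qed (simp add: q)
  next
    assume "q \<in> insert (n-j, j+1) (pm (n-j+1) (j+1) ` {q. S' q = Alpha})"
    then show "q \<in> {q. expX n j S' q = Alpha}"
    proof
      assume "q = (n-j, j+1)" then show ?thesis using j1 jn by (simp add: expX_app)
    next
      assume "q \<in> pm (n-j+1) (j+1) ` {q. S' q = Alpha}"
      then obtain a b where "S' (a,b) = Alpha" "q = pm (n-j+1) (j+1) (a,b)" by auto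
      then show ?thesis by (simp add: expX_def pm_def)
    qed
  qed
qed

lemma expX_beta: "{q. expX n j S' q = Beta} = insert (n-j+1, j) (pm (n-j+1) (j+1) ` {q. S' q = Beta})"
proof (rule set_eqI)
  fix q :: "nat \<times> nat"
  obtain i k where q: "q = (i,k)" by force
  show "q \<in> {q. expX n j S' q = Beta} \<longleftrightarrow> q \<in> insert (n-j+1, j) (pm (n-j+1) (j+1) ` {q. S' q = Beta})"
  proof
    assume "q \<in> {q. expX n j S' q = Beta}"
    then have "expX n j S' (i,k) = Beta" using q by simp
    then have "(i,k) = (n-j+1, j) \<or> (i \<noteq> n-j+1 \<and> k \<noteq> j+1 \<and> S' (dec (n-j+1) i, dec (j+1) k) = Beta)"
      unfolding expX_app by (auto split: if_splits)
    then show "q \<in> insert (n-j+1, j) (pm (n-j+1) (j+1) ` {q. S' q = Beta})"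
    proof
      assume h: "i \<noteq> n-j+1 \<and> k \<noteq> j+1 \<and> S' (dec (n-j+1) i, dec (j+1) k) = Beta"
      then have "q = pm (n-j+1) (j+1) (dec (n-j+1) i, dec (j+1) k)" unfolding q pm_def by (simp add: inc_dec)
      then show ?thesis using h by blast
    qed (simp add: q)
  next
    assume "q \<in> insert (n-j+1, j) (pm (n-j+1) (j+1) ` {q. S' q = Beta})"
    then show "q \<in> {q. expX n j S' q = Beta}"
    proof
      assume "q = (n-j+1, j)" then show ?thesis using j1 jn by (simp add: expX_app)
    next
      assume "q \<in> pm (n-j+1) (j+1) ` {q. S' q = Beta}"
      then obtain a b where "S' (a,b) = Beta" "q = pm (n-j+1) (j+1) (a,b)" by auto
      then show ?thesis by (simp add: expX_def pm_def)
    qed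
  qed
qed

lemma W_X:
  "W n a b (\<lambda>S. S (n-j, j) \<noteq> Empty \<and> P S) = a * b * W (n-1) a b (\<lambda>S'. True \<and> P (expX n j S'))"
proof -
  have "W n a b (\<lambda>S. S (n-j, j) \<noteq> Empty \<and> P S) = a ^ 1 * b ^ 1 * W (n-1) a b (\<lambda>S'. True \<and> P (expX n j S'))"
  proof (rule W_reindex[where co = "conX n j"])
    fix S' assume S': "S' \<in> stair_tableaux (n-1)" "True"
    show "expX n j S' \<in> stair_tableaux n \<and> expX n j S' (n-j, j) \<noteq> Empty \<and> conX n j (expX n j S') = S'"
    proof -
      have "S' (n-j, j) \<noteq> Empty" by (rule ST_diag[OF S'(1)]) (use j1 jn in auto)
      then show ?thesis using expX_ST[OF S'(1)] conX_expX j1 jn by (simp add: expX_app dec_def)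
    qed
    have fa: "finite {q. S' q = Alpha}" "finite {q. S' q = Beta}" using finA[OF S'(1)] finB[OF S'(1)] .
    have na: "(n-j, j+1) \<notin> pm (n-j+1) (j+1) ` {q. S' q = Alpha}" by (auto simp: pm_def)
    have nb: "(n-j+1, j) \<notin> pm (n-j+1) (j+1) ` {q. S' q = Beta}" by (auto simp: pm_def)
    show "cA (expX n j S') = cA S' + 1 \<and> cB (expX n j S') = cB S' + 1"
      unfolding cA_def cB_def expX_alpha expX_beta
      using card_ins_img[OF fa(1) na] card_ins_img[OF fa(2) nb] by simp
  next
    fix S assume "S \<in> stair_tableaux n" "S (n-j, j) \<noteq> Empty"
    then show "conX n j S \<in> stair_tableaux (n-1) \<and> True \<and> expX n j (conX n j S) = S"
      using conX_ST expX_conX by blast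
  qed
  then show ?thesis by simp
qed

end



section \<open>Boundary: alpha at (n,1)\<close>

definition conA :: "nat \<Rightarrow> (nat \<times> nat \<Rightarrow> cell) \<Rightarrow> (nat \<times> nat \<Rightarrow> cell)" where
  "conA n S = (\<lambda>q. S (pm n 1 q))"
definition expA :: "nat \<Rightarrow> (nat \<times> nat \<Rightarrow> cell) \<Rightarrow> (nat \<times> nat \<Rightarrow> cell)" where
  "expA n S' = (\<lambda>q. if q = (n, 1) then Alpha
      else if fst q = n \<or> snd q = 1 then Empty else S' (dec n (fst q), dec 1 (snd q)))"

lemma expA_app: "expA n S' (i,k) = (if i = n \<and> k = 1 then Alpha
      else if i = n \<or> k = 1 then Empty else S' (dec n i, dec 1 k))"
  unfolding expA_def by simp
lemma conA_app: "conA n S (i,k) = S (inc n i, inc 1 k)"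
  unfolding conA_def pm_def by simp

context fixes n :: nat assumes n1: "1 \<le> n"
begin

lemma expA_ST:
  assumes S': "S' \<in> stair_tableaux (n-1)"
  shows "expA n S' \<in> stair_tableaux n"
  unfolding ST_iff
proof (intro conjI allI impI)
  fix q assume nb: "\<not> box n q"
  obtain i k where q: "q = (i,k)" by force
  show "expA n S' q = Empty"
  proof (cases "i = n \<or> k = 1")
    case True then show ?thesis using nb n1 unfolding q expA_app by (auto simp: box_iff)
  next
    case False
    have "\<not> box (n-1) (dec n i, dec 1 k)"
      using nb False n1 unfolding q box_iff dec_def by auto
    then show ?thesis using False ST_out[OF S'] unfolding q expA_app by auto
  qed
next
  fix i k i' assume h: "box n (i,k) \<and> expA n S' (i,k) = Alpha \<and> 1 \<le> i' \<and> i' < i"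
  show "expA n S' (i',k) = Empty"
  proof (cases "i = n \<and> k = 1")
    case True then show ?thesis using h n1 unfolding expA_app by auto
  next
    case False
    then have nr: "i \<noteq> n" "k \<noteq> 1" and a: "S' (dec n i, dec 1 k) = Alpha"
      using h unfolding expA_app by (auto split: if_splits)
    have "S' (dec n i', dec 1 k) = Empty"
      by (rule ST_alpha[OF S' a]) (use h nr n1 in \<open>auto simp: dec_def box_iff\<close>)
    then show ?thesis using h nr n1 unfolding expA_app box_iff by auto
  qed
next
  fix i k k' assume h: "box n (i,k) \<and> expA n S' (i,k) = Beta \<and> 1 \<le> k' \<and> k' < k"
  then have nr: "i \<noteq> n" "k \<noteq> 1" and a: "S' (dec n i, dec 1 k) = Beta"
    unfolding expA_app by (auto split: if_splits)
  show "expA n S' (i,k') = Empty"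
  proof (cases "k' = 1")
    case True then show ?thesis using nr unfolding expA_app by auto
  next
    case False
    have "S' (dec n i, dec 1 k') = Empty"
      by (rule ST_beta[OF S' a]) (use h nr False in \<open>auto simp: dec_def\<close>)
    then show ?thesis using nr False unfolding expA_app by auto
  qed
next
  fix i k assume h: "1 \<le> i \<and> 1 \<le> k \<and> i + k = n + 1"
  show "expA n S' (i,k) \<noteq> Empty"
  proof (cases "i = n \<or> k = 1")
    case True then show ?thesis using h unfolding expA_app by auto
  next
    case False
    have "S' (dec n i, dec 1 k) \<noteq> Empty"
      by (rule ST_diag[OF S']) (use h False n1 in \<open>auto simp: dec_def\<close>)
    then show ?thesis using False unfolding expA_app by auto
  qed
qed

lemma conA_ST:
  assumes S: "S \<in> stair_tableaux n"
  shows "conA n S \<in> stair_tableaux (n-1)"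
  unfolding ST_iff
proof (intro conjI allI impI)
  fix q assume nb: "\<not> box (n-1) q"
  obtain i k where q: "q = (i,k)" by force
  have "\<not> box n (inc n i, inc 1 k)"
    using nb n1 unfolding q box_iff inc_def by auto
  then show "conA n S q = Empty" unfolding q conA_app using ST_out[OF S] by blast
next
  fix i k i' assume h: "box (n-1) (i,k) \<and> conA n S (i,k) = Alpha \<and> 1 \<le> i' \<and> i' < i"
  show "conA n S (i',k) = Empty" unfolding conA_app
    by (rule ST_alpha[OF S, of "inc n i"]) (use h in \<open>auto simp: conA_app inc_def\<close>)
next
  fix i k k' assume h: "box (n-1) (i,k) \<and> conA n S (i,k) = Beta \<and> 1 \<le> k' \<and> k' < k"
  show "conA n S (i,k') = Empty" unfolding conA_app
    by (rule ST_beta[OF S, of _ "inc 1 k"]) (use h in \<open>auto simp: conA_app inc_def\<close>)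
next
  fix i k assume h: "1 \<le> i \<and> 1 \<le> k \<and> i + k = n - 1 + 1"
  show "conA n S (i,k) \<noteq> Empty" unfolding conA_app
    by (rule ST_diag[OF S]) (use h n1 in \<open>auto simp: inc_def\<close>)
qed

lemma conA_expA: "conA n (expA n S') = S'"
  by (rule ext) (auto simp: conA_def expA_def pm_def)

lemma expA_conA:
  assumes S: "S \<in> stair_tableaux n" and D: "S (n, 1) = Alpha"
  shows "expA n (conA n S) = S"
proof (rule ext)
  fix q :: "nat \<times> nat"
  obtain i k where q: "q = (i,k)" by force
  show "expA n (conA n S) q = S q"
  proof (cases "i = n \<or> k = 1")
    case False
    then show ?thesis unfolding q expA_app conA_app by (auto simp: inc_dec)
  next
    case True
    show ?thesis
    proof (cases "(i,k) = (n, 1)")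
      case True
      then show ?thesis using D unfolding q expA_app by auto
    next
      case False
      have "S (i,k) = Empty"
      proof (cases "i = n")
        case True
        then show ?thesis using ST_out[OF S] False n1 by (auto simp: box_iff)
      next
        case False
        with \<open>i = n \<or> k = 1\<close> have kc: "k = 1" by auto
        show ?thesis
        proof (cases "1 \<le> i \<and> i < n")
          case True then show ?thesis using ST_alpha[OF S D] kc by auto
        next
          case False then show ?thesis using ST_out[OF S] kc \<open>i \<noteq> n\<close> n1 by (auto simp: box_iff)
        qed
      qed
      then show ?thesis using True False unfolding q expA_app by auto
    qed
  qed
qed

lemma expA_alpha: "{q. expA n S' q = Alpha} = insert (n, 1) (pm n 1 ` {q. S' q = Alpha})"
proof (rule set_eqI)
  fix q :: "nat \<times> nat"
  obtain i k where q: "q = (i,k)" by force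
  show "q \<in> {q. expA n S' q = Alpha} \<longleftrightarrow> q \<in> insert (n, 1) (pm n 1 ` {q. S' q = Alpha})"
  proof
    assume "q \<in> {q. expA n S' q = Alpha}"
    then have "expA n S' (i,k) = Alpha" using q by simp
    then have "(i,k) = (n, 1) \<or> (i \<noteq> n \<and> k \<noteq> 1 \<and> S' (dec n i, dec 1 k) = Alpha)"
      unfolding expA_app by (auto split: if_splits)
    then show "q \<in> insert (n, 1) (pm n 1 ` {q. S' q = Alpha})"
    proof
      assume h: "i \<noteq> n \<and> k \<noteq> 1 \<and> S' (dec n i, dec 1 k) = Alpha"
      then have "q = pm n 1 (dec n i, dec 1 k)" unfolding q pm_def by (simp add: inc_dec)
      then show ?thesis using h by blast
    qed (simp add: q)
  next
    assume "q \<in> insert (n, 1) (pm n 1 ` {q. S' q = Alpha})"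
    then show "q \<in> {q. expA n S' q = Alpha}"
    proof
      assume "q = (n, 1)" then show ?thesis by (simp add: expA_app)
    next
      assume "q \<in> pm n 1 ` {q. S' q = Alpha}"
      then obtain a b where "S' (a,b) = Alpha" "q = pm n 1 (a,b)" by auto
      then show ?thesis by (simp add: expA_def pm_def)
    qed
  qed
qed

lemma expA_beta: "{q. expA n S' q = Beta} = pm n 1 ` {q. S' q = Beta}"
proof (rule set_eqI)
  fix q :: "nat \<times> nat"
  obtain i k where q: "q = (i,k)" by force
  show "q \<in> {q. expA n S' q = Beta} \<longleftrightarrow> q \<in> pm n 1 ` {q. S' q = Beta}"
  proof
    assume "q \<in> {q. expA n S' q = Beta}"
    then have "expA n S' (i,k) = Beta" using q by simp
    then have h: "i \<noteq> n \<and> k \<noteq> 1 \<and> S' (dec n i, dec 1 k) = Beta"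
      unfolding expA_app by (auto split: if_splits)
    then have "q = pm n 1 (dec n i, dec 1 k)" unfolding q pm_def by (simp add: inc_dec)
    then show "q \<in> pm n 1 ` {q. S' q = Beta}" using h by blast
  next
    assume "q \<in> pm n 1 ` {q. S' q = Beta}"
    then obtain a b where "S' (a,b) = Beta" "q = pm n 1 (a,b)" by auto
    then show "q \<in> {q. expA n S' q = Beta}" by (simp add: expA_def pm_def)
  qed
qed

lemma W_A:
  "W n a b (\<lambda>S. S (n, 1) = Alpha) = a * W (n-1) a b (\<lambda>S'. True)"
proof -
  have "W n a b (\<lambda>S. S (n, 1) = Alpha \<and> True) = a ^ 1 * b ^ 0 * W (n-1) a b (\<lambda>S'. True \<and> True)"
  proof (rule W_reindex[where co = "conA n"])
    fix S' assume S': "S' \<in> stair_tableaux (n-1)" "True"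
    show "expA n S' \<in> stair_tableaux n \<and> expA n S' (n, 1) = Alpha \<and> conA n (expA n S') = S'"
      using expA_ST[OF S'(1)] conA_expA by (simp add: expA_app)
    have fa: "finite {q. S' q = Alpha}" "finite {q. S' q = Beta}" using finA[OF S'(1)] finB[OF S'(1)] .
    have na: "(n, 1) \<notin> pm n 1 ` {q. S' q = Alpha}" by (auto simp: pm_def)
    show "cA (expA n S') = cA S' + 1 \<and> cB (expA n S') = cB S' + 0"
      unfolding cA_def cB_def expA_alpha expA_beta
      using card_ins_img[OF fa(1) na] card_img[OF fa(2)] by simp
  next
    fix S assume "S \<in> stair_tableaux n" "S (n, 1) = Alpha"
    then show "conA n S \<in> stair_tableaux (n-1) \<and> True \<and> expA n (conA n S) = S"
      using conA_ST expA_conA by blast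
  qed
  then show ?thesis by simp
qed

end

section \<open>Boundary: beta at (1,n)\<close>

definition conB :: "nat \<Rightarrow> (nat \<times> nat \<Rightarrow> cell) \<Rightarrow> (nat \<times> nat \<Rightarrow> cell)" where
  "conB n S = (\<lambda>q. S (pm 1 n q))"
definition expB :: "nat \<Rightarrow> (nat \<times> nat \<Rightarrow> cell) \<Rightarrow> (nat \<times> nat \<Rightarrow> cell)" where
  "expB n S' = (\<lambda>q. if q = (1, n) then Beta
      else if fst q = 1 \<or> snd q = n then Empty else S' (dec 1 (fst q), dec n (snd q)))"

lemma expB_app: "expB n S' (i,k) = (if i = 1 \<and> k = n then Beta
      else if i = 1 \<or> k = n then Empty else S' (dec 1 i, dec n k))"
  unfolding expB_def by simp
lemma conB_app: "conB n S (i,k) = S (inc 1 i, inc n k)"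
  unfolding conB_def pm_def by simp

context fixes n :: nat assumes n1: "1 \<le> n"
begin

lemma expB_ST:
  assumes S': "S' \<in> stair_tableaux (n-1)"
  shows "expB n S' \<in> stair_tableaux n"
  unfolding ST_iff
proof (intro conjI allI impI)
  fix q assume nb: "\<not> box n q"
  obtain i k where q: "q = (i,k)" by force
  show "expB n S' q = Empty"
  proof (cases "i = 1 \<or> k = n")
    case True then show ?thesis using nb n1 unfolding q expB_app by (auto simp: box_iff)
  next
    case False
    have "\<not> box (n-1) (dec 1 i, dec n k)"
      using nb False n1 unfolding q box_iff dec_def by auto
    then show ?thesis using False ST_out[OF S'] unfolding q expB_app by auto
  qed
next
  fix i k i' assume h: "box n (i,k) \<and> expB n S' (i,k) = Alpha \<and> 1 \<le> i' \<and> i' < i"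
  then have nr: "i \<noteq> 1" "k \<noteq> n" and a: "S' (dec 1 i, dec n k) = Alpha"
    unfolding expB_app by (auto split: if_splits)
  show "expB n S' (i',k) = Empty"
  proof (cases "i' = 1")
    case True then show ?thesis using nr unfolding expB_app by auto
  next
    case False
    have "S' (dec 1 i', dec n k) = Empty"
      by (rule ST_alpha[OF S' a]) (use h nr False in \<open>auto simp: dec_def\<close>)
    then show ?thesis using nr False unfolding expB_app by auto
  qed
next
  fix i k k' assume h: "box n (i,k) \<and> expB n S' (i,k) = Beta \<and> 1 \<le> k' \<and> k' < k"
  show "expB n S' (i,k') = Empty"
  proof (cases "i = 1 \<and> k = n")
    case True then show ?thesis using h n1 unfolding expB_app by auto
  next
    case False
    then have nr: "i \<noteq> 1" "k \<noteq> n" and a: "S' (dec 1 i, dec n k) = Beta"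
      using h unfolding expB_app by (auto split: if_splits)
    have "S' (dec 1 i, dec n k') = Empty"
      by (rule ST_beta[OF S' a]) (use h nr n1 in \<open>auto simp: dec_def box_iff\<close>)
    then show ?thesis using h nr n1 unfolding expB_app box_iff by auto
  qed
next
  fix i k assume h: "1 \<le> i \<and> 1 \<le> k \<and> i + k = n + 1"
  show "expB n S' (i,k) \<noteq> Empty"
  proof (cases "i = 1 \<or> k = n")
    case True then show ?thesis using h unfolding expB_app by auto
  next
    case False
    have "S' (dec 1 i, dec n k) \<noteq> Empty"
      by (rule ST_diag[OF S']) (use h False n1 in \<open>auto simp: dec_def\<close>)
    then show ?thesis using False unfolding expB_app by auto
  qed
qed

lemma conB_ST:
  assumes S: "S \<in> stair_tableaux n"
  shows "conB n S \<in> stair_tableaux (n-1)"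
  unfolding ST_iff
proof (intro conjI allI impI)
  fix q assume nb: "\<not> box (n-1) q"
  obtain i k where q: "q = (i,k)" by force
  have "\<not> box n (inc 1 i, inc n k)"
    using nb n1 unfolding q box_iff inc_def by auto
  then show "conB n S q = Empty" unfolding q conB_app using ST_out[OF S] by blast
next
  fix i k i' assume h: "box (n-1) (i,k) \<and> conB n S (i,k) = Alpha \<and> 1 \<le> i' \<and> i' < i"
  show "conB n S (i',k) = Empty" unfolding conB_app
    by (rule ST_alpha[OF S, of "inc 1 i"]) (use h in \<open>auto simp: conB_app inc_def\<close>)
next
  fix i k k' assume h: "box (n-1) (i,k) \<and> conB n S (i,k) = Beta \<and> 1 \<le> k' \<and> k' < k"
  show "conB n S (i,k') = Empty" unfolding conB_app
    by (rule ST_beta[OF S, of _ "inc n k"]) (use h in \<open>auto simp: conB_app inc_def\<close>)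
next
  fix i k assume h: "1 \<le> i \<and> 1 \<le> k \<and> i + k = n - 1 + 1"
  show "conB n S (i,k) \<noteq> Empty" unfolding conB_app
    by (rule ST_diag[OF S]) (use h n1 in \<open>auto simp: inc_def\<close>)
qed

lemma conB_expB: "conB n (expB n S') = S'"
  by (rule ext) (auto simp: conB_def expB_def pm_def)

lemma expB_conB:
  assumes S: "S \<in> stair_tableaux n" and D: "S (1, n) = Beta"
  shows "expB n (conB n S) = S"
proof (rule ext)
  fix q :: "nat \<times> nat"
  obtain i k where q: "q = (i,k)" by force
  show "expB n (conB n S) q = S q"
  proof (cases "i = 1 \<or> k = n")
    case False
    then show ?thesis unfolding q expB_app conB_app by (auto simp: inc_dec)
  next
    case True
    show ?thesis
    proof (cases "(i,k) = (1, n)")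
      case True
      then show ?thesis using D unfolding q expB_app by auto
    next
      case False
      have "S (i,k) = Empty"
      proof (cases "k = n")
        case True
        then show ?thesis using ST_out[OF S] False n1 by (auto simp: box_iff)
      next
        case False
        with \<open>i = 1 \<or> k = n\<close> have kc: "i = 1" by auto
        show ?thesis
        proof (cases "1 \<le> k \<and> k < n")
          case True then show ?thesis using ST_beta[OF S D] kc by auto
        next
          case False then show ?thesis using ST_out[OF S] kc \<open>k \<noteq> n\<close> n1 by (auto simp: box_iff)
        qed
      qed
      then show ?thesis using True False unfolding q expB_app by auto
    qed
  qed
qed

lemma expB_beta: "{q. expB n S' q = Beta} = insert (1, n) (pm 1 n ` {q. S' q = Beta})"
proof (rule set_eqI)
  fix q :: "nat \<times> nat"
  obtain i k where q: "q = (i,k)" by force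
  show "q \<in> {q. expB n S' q = Beta} \<longleftrightarrow> q \<in> insert (1, n) (pm 1 n ` {q. S' q = Beta})"
  proof
    assume "q \<in> {q. expB n S' q = Beta}"
    then have "expB n S' (i,k) = Beta" using q by simp
    then have "(i,k) = (1, n) \<or> (i \<noteq> 1 \<and> k \<noteq> n \<and> S' (dec 1 i, dec n k) = Beta)"
      unfolding expB_app by (auto split: if_splits)
    then show "q \<in> insert (1, n) (pm 1 n ` {q. S' q = Beta})"
    proof
      assume h: "i \<noteq> 1 \<and> k \<noteq> n \<and> S' (dec 1 i, dec n k) = Beta"
      then have "q = pm 1 n (dec 1 i, dec n k)" unfolding q pm_def by (simp add: inc_dec)
      then show ?thesis using h by blast
    qed (simp add: q)
  next
    assume "q \<in> insert (1, n) (pm 1 n ` {q. S' q = Beta})"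
    then show "q \<in> {q. expB n S' q = Beta}"
    proof
      assume "q = (1, n)" then show ?thesis by (simp add: expB_app)
    next
      assume "q \<in> pm 1 n ` {q. S' q = Beta}"
      then obtain a b where "S' (a,b) = Beta" "q = pm 1 n (a,b)" by auto
      then show ?thesis by (simp add: expB_def pm_def)
    qed
  qed
qed

lemma expB_alpha: "{q. expB n S' q = Alpha} = pm 1 n ` {q. S' q = Alpha}"
proof (rule set_eqI)
  fix q :: "nat \<times> nat"
  obtain i k where q: "q = (i,k)" by force
  show "q \<in> {q. expB n S' q = Alpha} \<longleftrightarrow> q \<in> pm 1 n ` {q. S' q = Alpha}"
  proof
    assume "q \<in> {q. expB n S' q = Alpha}"
    then have "expB n S' (i,k) = Alpha" using q by simp
    then have h: "i \<noteq> 1 \<and> k \<noteq> n \<and> S' (dec 1 i, dec n k) = Alpha"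
      unfolding expB_app by (auto split: if_splits)
    then have "q = pm 1 n (dec 1 i, dec n k)" unfolding q pm_def by (simp add: inc_dec)
    then show "q \<in> pm 1 n ` {q. S' q = Alpha}" using h by blast
  next
    assume "q \<in> pm 1 n ` {q. S' q = Alpha}"
    then obtain a b where "S' (a,b) = Alpha" "q = pm 1 n (a,b)" by auto
    then show "q \<in> {q. expB n S' q = Alpha}" by (simp add: expB_def pm_def)
  qed
qed

lemma W_B:
  "W n a b (\<lambda>S. S (1, n) = Beta) = b * W (n-1) a b (\<lambda>S'. True)"
proof -
  have "W n a b (\<lambda>S. S (1, n) = Beta \<and> True) = a ^ 0 * b ^ 1 * W (n-1) a b (\<lambda>S'. True \<and> True)"
  proof (rule W_reindex[where co = "conB n"])
    fix S' assume S': "S' \<in> stair_tableaux (n-1)" "True"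
    show "expB n S' \<in> stair_tableaux n \<and> expB n S' (1, n) = Beta \<and> conB n (expB n S') = S'"
      using expB_ST[OF S'(1)] conB_expB by (simp add: expB_app)
    have fa: "finite {q. S' q = Alpha}" "finite {q. S' q = Beta}" using finA[OF S'(1)] finB[OF S'(1)] .
    have nb: "(1, n) \<notin> pm 1 n ` {q. S' q = Beta}" by (auto simp: pm_def)
    show "cA (expB n S') = cA S' + 0 \<and> cB (expB n S') = cB S' + 1"
      unfolding cA_def cB_def expB_alpha expB_beta
      using card_ins_img[OF fa(2) nb] card_img[OF fa(1)] by simp
  next
    fix S assume "S \<in> stair_tableaux n" "S (1, n) = Beta"
    then show "conB n S \<in> stair_tableaux (n-1) \<and> True \<and> expB n (conB n S) = S"
      using conB_ST expB_conB by blast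
  qed
  then show ?thesis by simp
qed

end



definition sg :: "nat \<Rightarrow> nat \<Rightarrow> nat" where
  "sg p i = (if i = p then Suc p else if i = Suc p then p else i)"
definition sw :: "nat \<Rightarrow> nat \<Rightarrow> (nat \<times> nat \<Rightarrow> cell) \<Rightarrow> (nat \<times> nat \<Rightarrow> cell)" where
  "sw n p S = (\<lambda>q. S (sg p (fst q), sg (n-p) (snd q)))"
definition swm :: "nat \<Rightarrow> nat \<Rightarrow> nat \<times> nat \<Rightarrow> nat \<times> nat" where
  "swm n p q = (sg p (fst q), sg (n-p) (snd q))"

lemma sg_out: "1 \<le> p \<Longrightarrow> 1 \<le> m \<Longrightarrow> \<not> (1 \<le> i \<and> 1 \<le> k \<and> i + k \<le> p + m + 1) \<Longrightarrow> \<not>(i = p+1 \<and> k = m+1)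
   \<Longrightarrow> \<not>(1 \<le> sg p i \<and> 1 \<le> sg m k \<and> sg p i + sg m k \<le> p + m + 1)"
  unfolding sg_def by (auto split: if_splits)

lemma sg_diag: "1 \<le> p \<Longrightarrow> 1 \<le> m \<Longrightarrow> 1 \<le> i \<Longrightarrow> 1 \<le> k \<Longrightarrow> i + k = p + m + 1
   \<Longrightarrow> 1 \<le> sg p i \<and> 1 \<le> sg m k \<and> sg p i + sg m k = p + m + 1"
  unfolding sg_def by (auto split: if_splits)

lemma sg_ge1: "1 \<le> p \<Longrightarrow> 1 \<le> i \<Longrightarrow> 1 \<le> sg p i"
  unfolding sg_def by simp

lemma sg_mono: "\<not>(i' = p \<and> i = Suc p) \<Longrightarrow> i' < i \<Longrightarrow> sg p i' < sg p i"
  unfolding sg_def by (auto split: if_splits)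

lemma sg_p[simp]: "sg p p = Suc p" "sg p (Suc p) = p" by (auto simp: sg_def)

lemma sw_app: "sw n p S (i,k) = S (sg p i, sg (n-p) k)" by (simp add: sw_def)
lemma sg_sg[simp]: "sg p (sg p i) = i" by (auto simp: sg_def)
lemma swm_swm[simp]: "swm n p (swm n p q) = q" by (simp add: swm_def)
lemma sw_sw[simp]: "sw n p (sw n p S) = S" by (rule ext) (simp add: sw_def)
lemma swm_inj: "inj (swm n p)" by (metis injI swm_swm)

definition Qs :: "nat \<Rightarrow> nat \<Rightarrow> (nat \<times> nat \<Rightarrow> cell) \<Rightarrow> bool" where
  "Qs n p S \<longleftrightarrow> S (p, n-p+1) = Alpha \<and> S (p+1, n-p) = Beta \<and> S (p, n-p) = Empty"
definition Qs' :: "nat \<Rightarrow> nat \<Rightarrow> (nat \<times> nat \<Rightarrow> cell) \<Rightarrow> bool" where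
  "Qs' n p S \<longleftrightarrow> S (p, n-p+1) = Beta \<and> S (p+1, n-p) = Alpha"

lemma sw_alpha: "{q. sw n p S q = Alpha} = swm n p ` {q. S q = Alpha}"
proof (rule set_eqI)
  fix q :: "nat \<times> nat"
  have e: "sw n p S q = S (swm n p q)" by (simp add: sw_def swm_def)
  show "q \<in> {q. sw n p S q = Alpha} \<longleftrightarrow> q \<in> swm n p ` {q. S q = Alpha}"
  proof
    assume "q \<in> {q. sw n p S q = Alpha}"
    then have "swm n p q \<in> {q. S q = Alpha}" using e by simp
    then have "swm n p (swm n p q) \<in> swm n p ` {q. S q = Alpha}" by (rule imageI)
    then show "q \<in> swm n p ` {q. S q = Alpha}" by simp
  next
    assume "q \<in> swm n p ` {q. S q = Alpha}"
    then obtain x where x: "S x = Alpha" "q = swm n p x" by blast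
    then show "q \<in> {q. sw n p S q = Alpha}" using e by simp
  qed
qed

lemma sw_beta: "{q. sw n p S q = Beta} = swm n p ` {q. S q = Beta}"
proof (rule set_eqI)
  fix q :: "nat \<times> nat"
  have e: "sw n p S q = S (swm n p q)" by (simp add: sw_def swm_def)
  show "q \<in> {q. sw n p S q = Beta} \<longleftrightarrow> q \<in> swm n p ` {q. S q = Beta}"
  proof
    assume "q \<in> {q. sw n p S q = Beta}"
    then have "swm n p q \<in> {q. S q = Beta}" using e by simp
    then have "swm n p (swm n p q) \<in> swm n p ` {q. S q = Beta}" by (rule imageI)
    then show "q \<in> swm n p ` {q. S q = Beta}" by simp
  next
    assume "q \<in> swm n p ` {q. S q = Beta}"
    then obtain x where x: "S x = Beta" "q = swm n p x" by blast
    then show "q \<in> {q. sw n p S q = Beta}" using e by simp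
  qed
qed

context fixes n p :: nat assumes p1: "1 \<le> p" and pn: "p < n"
begin

lemma sw_ST:
  assumes S: "S \<in> stair_tableaux n" and Q: "Qs n p S \<or> Qs' n p S"
  shows "sw n p S \<in> stair_tableaux n"
proof -
  define m where "m = n - p"
  have nm: "n = p + m" and m1: "1 \<le> m" using pn unfolding m_def by auto
  have E0: "S (p, m) = Empty"
    using Q
  proof
    assume "Qs n p S" then show ?thesis by (simp add: Qs_def m_def)
  next
    assume "Qs' n p S"
    then have "S (p+1, m) = Alpha" by (simp add: Qs'_def m_def)
    from ST_alpha[OF S this, of p] p1 show ?thesis by simp
  qed
  have Q': "(S (p, Suc m) = Alpha \<and> S (Suc p, m) = Beta \<and> S (p, m) = Empty) \<or>
      (S (p, Suc m) = Beta \<and> S (Suc p, m) = Alpha)"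
    using Q unfolding Qs_def Qs'_def m_def by simp
  have swa: "\<And>i k. sw n p S (i,k) = S (sg p i, sg m k)" by (simp add: sw_app m_def)
  show ?thesis
    unfolding ST_iff swa
  proof (intro conjI allI impI)
    fix q assume nb: "\<not> box n q"
    obtain i k where q: "q = (i,k)" by force
    show "sw n p S q = Empty"
    proof (cases "i = p+1 \<and> k = m+1")
      case True then show ?thesis using E0 unfolding q swa by simp
    next
      case False
      have "\<not> box n (sg p i, sg m k)"
        using sg_out[OF p1 m1, of i k] nb False unfolding q box_iff nm by simp
      then show ?thesis unfolding q swa using ST_out[OF S] by blast
    qed
  next
    fix i k i' assume h: "box n (i,k) \<and> S (sg p i, sg m k) = Alpha \<and> 1 \<le> i' \<and> i' < i"
    then have a: "S (sg p i, sg m k) = Alpha" by simp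
    have k1: "1 \<le> sg m k" using h m1 sg_ge1[of m k] by (simp add: box_iff)
    show "S (sg p i', sg m k) = Empty"
    proof (cases "i' = p \<and> i = Suc p")
      case True
      then have a': "S (p, sg m k) = Alpha" using a by simp
      have "S (Suc p, sg m k) = Empty"
        using Q'
      proof
        assume "S (p, Suc m) = Alpha \<and> S (Suc p, m) = Beta \<and> S (p, m) = Empty"
        then have B: "S (Suc p, m) = Beta" and X: "S (p, m) = Empty" by auto
        consider "sg m k < m" | "sg m k = m" | "sg m k > m" by linarith
        then show ?thesis
        proof cases
          case 1 then show ?thesis using ST_beta[OF S B k1] by simp
        next
          case 2 then show ?thesis using a' X by simp
        next
          case 3 then have "\<not> box n (Suc p, sg m k)" unfolding nm box_iff by simp
          then show ?thesis using ST_out[OF S] by blast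
        qed
      next
        assume "S (p, Suc m) = Beta \<and> S (Suc p, m) = Alpha"
        then have B: "S (p, Suc m) = Beta" by auto
        consider "sg m k < Suc m" | "sg m k = Suc m" | "sg m k > Suc m" by linarith
        then show ?thesis
        proof cases
          case 1 then show ?thesis using ST_beta[OF S B k1] a' by simp
        next
          case 2 then show ?thesis using a' B by simp
        next
          case 3 then have "\<not> box n (p, sg m k)" unfolding nm box_iff by simp
          then show ?thesis using ST_out[OF S] a' by simp
        qed
      qed
      then show ?thesis using True by simp
    next
      case False
      have "1 \<le> sg p i'" using sg_ge1[OF p1] h by simp
      moreover have "sg p i' < sg p i" using sg_mono[OF False] h by simp
      ultimately show ?thesis using ST_alpha[OF S a] by simp
    qed
  next
    fix i k k' assume h: "box n (i,k) \<and> S (sg p i, sg m k) = Beta \<and> 1 \<le> k' \<and> k' < k"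
    then have a: "S (sg p i, sg m k) = Beta" by simp
    have i1: "1 \<le> sg p i" using h p1 sg_ge1[of p i] by (simp add: box_iff)
    show "S (sg p i, sg m k') = Empty"
    proof (cases "k' = m \<and> k = Suc m")
      case True
      then have a': "S (sg p i, m) = Beta" using a by simp
      have "S (sg p i, Suc m) = Empty"
        using Q'
      proof
        assume "S (p, Suc m) = Alpha \<and> S (Suc p, m) = Beta \<and> S (p, m) = Empty"
        then have A: "S (p, Suc m) = Alpha" and X: "S (p, m) = Empty" by auto
        consider "sg p i < p" | "sg p i = p" | "sg p i > p" by linarith
        then show ?thesis
        proof cases
          case 1 then show ?thesis using ST_alpha[OF S A i1] by simp
        next
          case 2 then show ?thesis using a' X by simp
        next
          case 3 then have "\<not> box n (sg p i, Suc m)" unfolding nm box_iff by simp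
          then show ?thesis using ST_out[OF S] by blast
        qed
      next
        assume "S (p, Suc m) = Beta \<and> S (Suc p, m) = Alpha"
        then have A: "S (Suc p, m) = Alpha" by auto
        consider "sg p i < Suc p" | "sg p i = Suc p" | "sg p i > Suc p" by linarith
        then show ?thesis
        proof cases
          case 1 then show ?thesis using ST_alpha[OF S A i1] a' by simp
        next
          case 2 then show ?thesis using a' A by simp
        next
          case 3 then have "\<not> box n (sg p i, m)" unfolding nm box_iff by simp
          then show ?thesis using ST_out[OF S] a' by simp
        qed
      qed
      then show ?thesis using True by simp
    next
      case False
      have "1 \<le> sg m k'" using sg_ge1[OF m1] h by simp
      moreover have "sg m k' < sg m k" using sg_mono[OF False] h by simp
      ultimately show ?thesis using ST_beta[OF S a] by simp
    qed
  next
    fix i k assume h: "1 \<le> i \<and> 1 \<le> k \<and> i + k = n + 1"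
    have "1 \<le> sg p i \<and> 1 \<le> sg m k \<and> sg p i + sg m k = p + m + 1"
      by (rule sg_diag[OF p1 m1]) (use h nm in auto)
    then show "S (sg p i, sg m k) \<noteq> Empty"
      using ST_diag[OF S] nm by simp
  qed
qed

lemma sw_Qs: "S \<in> stair_tableaux n \<Longrightarrow> Qs n p S \<Longrightarrow> Qs' n p (sw n p S)"
proof -
  assume "Qs n p S"
  moreover have "sg (n-p) (n-p+1) = n-p" "sg (n-p) (n-p) = n-p+1" by simp_all
  ultimately show ?thesis unfolding Qs_def Qs'_def sw_app by simp
qed

lemma sw_Qs': "S \<in> stair_tableaux n \<Longrightarrow> Qs' n p S \<Longrightarrow> Qs n p (sw n p S)"
proof -
  assume S: "S \<in> stair_tableaux n" and Q: "Qs' n p S"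
  have "\<not> box n (p+1, n-p+1)" using pn by (simp add: box_iff)
  then have "S (p+1, n-p+1) = Empty" using ST_out[OF S] by blast
  moreover have "sg (n-p) (n-p+1) = n-p" "sg (n-p) (n-p) = n-p+1" by simp_all
  ultimately show ?thesis using Q unfolding Qs_def Qs'_def sw_app by simp
qed

lemma W_sw: "W n a b (Qs n p) = W n a b (Qs' n p)"
proof -
  have "W n a b (\<lambda>S. Qs n p S \<and> True) = a ^ 0 * b ^ 0 * W n a b (\<lambda>S'. Qs' n p S' \<and> True)"
  proof (rule W_reindex[where co = "sw n p" and ex = "sw n p"])
    fix S' assume S': "S' \<in> stair_tableaux n" "Qs' n p S'"
    show "sw n p S' \<in> stair_tableaux n \<and> Qs n p (sw n p S') \<and> sw n p (sw n p S') = S'"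
      using sw_ST[OF S'(1)] S' sw_Qs' by simp
    have fa: "finite {q. S' q = Alpha}" "finite {q. S' q = Beta}" using finA[OF S'(1)] finB[OF S'(1)] .
    show "cA (sw n p S') = cA S' + 0 \<and> cB (sw n p S') = cB S' + 0"
      unfolding cA_def cB_def sw_alpha sw_beta
      by (simp add: card_image inj_on_subset[OF swm_inj])
  next
    fix S assume S: "S \<in> stair_tableaux n" "Qs n p S"
    then show "sw n p S \<in> stair_tableaux n \<and> Qs' n p (sw n p S) \<and> sw n p (sw n p S) = S"
      using sw_ST sw_Qs by simp
  qed
  then show ?thesis by simp
qed

end



definition Z :: "nat \<Rightarrow> real \<Rightarrow> real \<Rightarrow> real" where "Z n a b = W n a b (\<lambda>S. True)"

lemma diag_nA: "S \<in> stair_tableaux n \<Longrightarrow> 1 \<le> i \<Longrightarrow> 1 \<le> k \<Longrightarrow> i + k = n + 1 \<Longrightarrow> S (i,k) \<noteq> Alpha \<longleftrightarrow> S (i,k) = Beta"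
  using ST_diag[of S n i k] by (cases "S (i,k)") auto

lemma X_DR:
  assumes S: "S \<in> stair_tableaux n" and p1: "1 \<le> p" and pn: "p < n" and X: "S (p, n-p) \<noteq> Empty"
  shows "S (p, n-p+1) = Alpha \<and> S (p+1, n-p) = Beta"
proof
  have "S (p, n-p+1) \<noteq> Empty" by (rule ST_diag[OF S]) (use p1 pn in auto)
  moreover have "S (p, n-p+1) \<noteq> Beta"
  proof
    assume "S (p, n-p+1) = Beta"
    moreover have "1 \<le> n-p" "n-p < n-p+1" using pn by auto
    ultimately have "S (p, n-p) = Empty" using ST_beta[OF S] by blast
    then show False using X by simp
  qed
  ultimately show "S (p, n-p+1) = Alpha" by (cases "S (p, n-p+1)") auto
next
  have "S (p+1, n-p) \<noteq> Empty" by (rule ST_diag[OF S]) (use p1 pn in auto)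
  moreover have "S (p+1, n-p) \<noteq> Alpha"
  proof
    assume "S (p+1, n-p) = Alpha"
    moreover have "1 \<le> p" "p < p+1" using p1 by auto
    ultimately have "S (p, n-p) = Empty" using ST_alpha[OF S] by blast
    then show False using X by simp
  qed
  ultimately show "S (p+1, n-p) = Beta" by (cases "S (p+1, n-p)") auto
qed

lemma step:
  assumes p1: "1 \<le> p" and pn: "p < n"
  shows "W n a b (\<lambda>S. S (p, n-p+1) = Alpha) = W n a b (\<lambda>S. S (p+1, n-(p+1)+1) = Alpha) + a*b*Z (n-1) a b"
proof -
  have e2: "n-(p+1)+1 = n-p" using pn by simp
  define P1 where "P1 = (\<lambda>S::nat\<times>nat\<Rightarrow>cell. S (p, n-p+1) = Alpha)"
  define P2 where "P2 = (\<lambda>S::nat\<times>nat\<Rightarrow>cell. S (p+1, n-p) = Alpha)"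
  define X where "X = (\<lambda>S::nat\<times>nat\<Rightarrow>cell. S (p, n-p) \<noteq> Empty)"
  have h1: "W n a b P1 = W n a b (\<lambda>S. P1 S \<and> P2 S) + W n a b (\<lambda>S. P1 S \<and> \<not> P2 S)" by (rule W_split)
  have h2: "W n a b P2 = W n a b (\<lambda>S. P2 S \<and> P1 S) + W n a b (\<lambda>S. P2 S \<and> \<not> P1 S)" by (rule W_split)
  have h3: "W n a b (\<lambda>S. P2 S \<and> P1 S) = W n a b (\<lambda>S. P1 S \<and> P2 S)" by (rule W_cong) auto
  have h4: "W n a b (\<lambda>S. P1 S \<and> \<not> P2 S) = W n a b (\<lambda>S. (P1 S \<and> \<not> P2 S) \<and> X S) + W n a b (\<lambda>S. (P1 S \<and> \<not> P2 S) \<and> \<not> X S)"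
    by (rule W_split)
  have e1: "n - (n-p) = p" using pn by simp
  have j1: "1 \<le> n-p" "n-p < n" using p1 pn by auto
  have h5: "W n a b (\<lambda>S. (P1 S \<and> \<not> P2 S) \<and> X S) = W n a b (\<lambda>S. S (n - (n-p), n-p) \<noteq> Empty \<and> True)"
  proof (rule W_cong)
    fix S assume S: "S \<in> stair_tableaux n"
    show "((P1 S \<and> \<not> P2 S) \<and> X S) = (S (n - (n-p), n-p) \<noteq> Empty \<and> True)"
      using X_DR[OF S p1 pn] unfolding P1_def P2_def X_def e1 by auto
  qed
  have h6: "W n a b (\<lambda>S. S (n - (n-p), n-p) \<noteq> Empty \<and> True) = a*b*Z (n-1) a b"
    using W_X[OF j1, of a b "\<lambda>_. True"] unfolding Z_def by simp
  have h7: "W n a b (\<lambda>S. (P1 S \<and> \<not> P2 S) \<and> \<not> X S) = W n a b (Qs n p)"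
  proof (rule W_cong)
    fix S assume S: "S \<in> stair_tableaux n"
    have "S (p+1, n-p) \<noteq> Alpha \<longleftrightarrow> S (p+1, n-p) = Beta" by (rule diag_nA[OF S]) (use p1 pn in auto)
    then show "((P1 S \<and> \<not> P2 S) \<and> \<not> X S) = Qs n p S"
      unfolding P1_def P2_def X_def Qs_def by auto
  qed
  have h8: "W n a b (Qs n p) = W n a b (Qs' n p)" by (rule W_sw[OF p1 pn])
  have h9: "W n a b (Qs' n p) = W n a b (\<lambda>S. P2 S \<and> \<not> P1 S)"
  proof (rule W_cong)
    fix S assume S: "S \<in> stair_tableaux n"
    have "S (p, n-p+1) \<noteq> Alpha \<longleftrightarrow> S (p, n-p+1) = Beta" by (rule diag_nA[OF S]) (use p1 pn in auto)
    then show "Qs' n p S = (P2 S \<and> \<not> P1 S)"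
      unfolding P1_def P2_def Qs'_def by auto
  qed
  have "W n a b P1 = W n a b P2 + a*b*Z (n-1) a b"
    using h1 h2 h3 h4 h5 h6 h7 h8 h9 by simp
  then show ?thesis unfolding P1_def P2_def e2 .
qed

lemma tele:
  assumes "d < n"
  shows "W n a b (\<lambda>S. S (n-d, n-(n-d)+1) = Alpha) = W n a b (\<lambda>S. S (n, 1) = Alpha) + real d * (a*b*Z (n-1) a b)"
  using assms
proof (induction d)
  case 0 then show ?case by simp
next
  case (Suc d)
  define p where "p = n - Suc d"
  have p1: "1 \<le> p" and pn: "p < n" and pd: "p + 1 = n - d" using Suc.prems unfolding p_def by auto
  have "W n a b (\<lambda>S. S (p, n-p+1) = Alpha) = W n a b (\<lambda>S. S (p+1, n-(p+1)+1) = Alpha) + a*b*Z (n-1) a b"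
    by (rule step[OF p1 pn])
  also have "W n a b (\<lambda>S. S (p+1, n-(p+1)+1) = Alpha) = W n a b (\<lambda>S. S (n, 1) = Alpha) + real d * (a*b*Z (n-1) a b)"
    using Suc.IH Suc.prems unfolding pd by simp
  finally show ?case unfolding p_def by (simp add: algebra_simps)
qed

lemma Zrec:
  assumes n1: "1 \<le> n"
  shows "Z n a b = (a + b + real (n-1) * a * b) * Z (n-1) a b"
proof -
  have s: "Z n a b = W n a b (\<lambda>S. True \<and> S (1, n) = Alpha) + W n a b (\<lambda>S. True \<and> \<not> S (1, n) = Alpha)"
    unfolding Z_def by (rule W_split)
  have t: "W n a b (\<lambda>S. True \<and> S (1, n) = Alpha) = W n a b (\<lambda>S. S (n, 1) = Alpha) + real (n-1) * (a*b*Z (n-1) a b)"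
    using tele[of "n-1" n a b] n1 by simp
  have u: "W n a b (\<lambda>S. True \<and> \<not> S (1, n) = Alpha) = W n a b (\<lambda>S. S (1, n) = Beta)"
  proof (rule W_cong)
    fix S assume S: "S \<in> stair_tableaux n"
    show "(True \<and> \<not> S (1, n) = Alpha) = (S (1, n) = Beta)" using diag_nA[OF S, of 1 n] n1 by simp
  qed
  have "Z n a b = a * Z (n-1) a b + real (n-1) * (a*b*Z (n-1) a b) + b * Z (n-1) a b"
    using s t u W_A[OF n1] W_B[OF n1] unfolding Z_def by simp
  then show ?thesis by (simp add: algebra_simps)
qed

lemma ST0: "stair_tableaux 0 = {\<lambda>_. Empty}"
proof
  show "stair_tableaux 0 \<subseteq> {\<lambda>_. Empty}"
  proof
    fix S assume S: "S \<in> stair_tableaux 0"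
    have "S = (\<lambda>_. Empty)"
    proof (rule ext)
      fix q :: "nat \<times> nat"
      have "\<not> box 0 q" unfolding box_def by auto
      then show "S q = Empty" using ST_out[OF S] by blast
    qed
    then show "S \<in> {\<lambda>_. Empty}" by simp
  qed
  have "(\<lambda>_. Empty) \<in> stair_tableaux 0" unfolding stair_tableaux_def by auto
  then show "{\<lambda>_. Empty} \<subseteq> stair_tableaux 0" by simp
qed

lemma Z0: "Z 0 a b = 1"
  unfolding Z_def W_def ST0 wt_def N_alpha_def N_beta_def by simp

lemma Zprod: "Z n a b = (\<Prod>i<n. a + b + real i * a * b)"
proof (induction n)
  case 0 then show ?case by (simp add: Z0)
next
  case (Suc n)
  then show ?case using Zrec[of "Suc n" a b] by (simp add: mult.commute)
qed



lemma events:
  "finite J \<Longrightarrow> (\<forall>j\<in>J. 1 \<le> j \<and> j < n) \<Longrightarrow> (\<forall>i\<in>J. \<forall>j\<in>J. i < j \<longrightarrow> i + 2 \<le> j) \<Longrightarrow>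
   W n a b (\<lambda>S. \<forall>j\<in>J. S (n-j, j) \<noteq> Empty) = (a*b) ^ card J * Z (n - card J) a b"
proof (induction "card J" arbitrary: n J)
  case 0
  then have "J = {}" by simp
  then show ?case unfolding Z_def by simp
next
  case (Suc c)
  have fin: "finite J" and bnd: "\<forall>j\<in>J. 1 \<le> j \<and> j < n" and gap: "\<forall>i\<in>J. \<forall>j\<in>J. i < j \<longrightarrow> i + 2 \<le> j"
    using Suc.prems by auto
  have ne: "J \<noteq> {}" using Suc.hyps(2) by auto
  define j where "j = Max J"
  have jJ: "j \<in> J" unfolding j_def using fin ne by simp
  define J' where "J' = J - {j}"
  have cJ': "c = card J'" unfolding J'_def using Suc.hyps(2) jJ fin by simp
  have finJ': "finite J'" using fin unfolding J'_def by simp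
  have lt: "\<forall>i\<in>J'. i + 2 \<le> j"
  proof
    fix i assume "i \<in> J'"
    then have "i \<in> J" "i \<noteq> j" unfolding J'_def by auto
    then have "i < j" unfolding j_def using fin Max_ge[OF fin] by (metis j_def order_le_neq_trans)
    then show "i + 2 \<le> j" using gap \<open>i \<in> J\<close> jJ by blast
  qed
  have j1: "1 \<le> j" and jn: "j < n" using bnd jJ by auto
  have JJ: "J = insert j J'" unfolding J'_def using jJ by auto
  have "W n a b (\<lambda>S. \<forall>j\<in>J. S (n-j, j) \<noteq> Empty) =
        W n a b (\<lambda>S. S (n-j, j) \<noteq> Empty \<and> (\<forall>i\<in>J'. S (n-i, i) \<noteq> Empty))"
    unfolding JJ by simp
  also have "\<dots> = a * b * W (n-1) a b (\<lambda>S'. True \<and> (\<forall>i\<in>J'. expX n j S' (n-i, i) \<noteq> Empty))"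
    by (rule W_X[OF j1 jn])
  also have "W (n-1) a b (\<lambda>S'. True \<and> (\<forall>i\<in>J'. expX n j S' (n-i, i) \<noteq> Empty)) =
             W (n-1) a b (\<lambda>S'. \<forall>i\<in>J'. S' (n-1-i, i) \<noteq> Empty)"
  proof (rule W_cong)
    fix S' :: "nat \<times> nat \<Rightarrow> cell"
    have "\<forall>i\<in>J'. expX n j S' (n-i, i) = S' (n-1-i, i)"
    proof
      fix i assume "i \<in> J'"
      then have "i + 2 \<le> j" using lt by blast
      then show "expX n j S' (n-i, i) = S' (n-1-i, i)"
        using jn unfolding expX_app dec_def by auto
    qed
    then show "(True \<and> (\<forall>i\<in>J'. expX n j S' (n-i, i) \<noteq> Empty)) = (\<forall>i\<in>J'. S' (n-1-i, i) \<noteq> Empty)"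
      by simp
  qed
  also have "W (n-1) a b (\<lambda>S'. \<forall>i\<in>J'. S' (n-1-i, i) \<noteq> Empty) = (a*b) ^ card J' * Z (n - 1 - card J') a b"
  proof (rule Suc.hyps(1)[OF cJ' finJ'])
    show "\<forall>i\<in>J'. 1 \<le> i \<and> i < n - 1"
    proof
      fix i assume iJ: "i \<in> J'"
      then have "1 \<le> i" using bnd unfolding J'_def by auto
      moreover have "i + 2 \<le> j" using lt iJ by blast
      ultimately show "1 \<le> i \<and> i < n - 1" using jn by linarith
    qed
    show "\<forall>i\<in>J'. \<forall>k\<in>J'. i < k \<longrightarrow> i + 2 \<le> k" using gap unfolding J'_def by auto
  qed
  finally have fin1: "W n a b (\<lambda>S. \<forall>j\<in>J. S (n-j, j) \<noteq> Empty) = a * b * ((a*b) ^ card J' * Z (n - 1 - card J') a b)" .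
  have cJ: "card J = Suc (card J')" using Suc.hyps(2) cJ' by simp
  have "n - 1 - card J' = n - card J" unfolding cJ by simp
  then show ?case using fin1 unfolding cJ by (simp add: algebra_simps)
qed

lemma Zsplit: "Z (m + r) a b = Z m a b * (\<Prod>i<r. a + b + real (m+i) * a * b)"
proof (induction r)
  case 0 then show ?case by simp
next
  case (Suc r)
  have "Z (m + Suc r) a b = (a + b + real (m+r) * a * b) * Z (m + r) a b"
    using Zrec[of "m + Suc r" a b] by simp
  then show ?case using Suc.IH by (simp add: algebra_simps)
qed

lemma prod_shift1: "(\<Prod>k=1..r. g k) = (\<Prod>i<r. g (Suc i :: nat)) "
  by (induction r) (simp_all add: mult.commute)

lemma ratio:
  fixes a b :: real
  assumes a: "a > 0" and b: "b > 0" and rn: "r \<le> n"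
  shows "(a*b) ^ r * Z (n - r) a b / Z n a b = (\<Prod>k=1..r. 1 / (real n + 1/a + 1/b - real r + real k - 1))"
proof -
  define m where "m = n - r"
  have nm: "n = m + r" using rn unfolding m_def by simp
  have cpos: "\<And>i. a + b + real i * a * b > 0"
  proof -
    fix i
    have "real i * a * b \<ge> 0" using a b by simp
    then show "a + b + real i * a * b > 0" using a b by linarith
  qed
  have Zm: "Z m a b > 0" unfolding Zprod by (rule prod_pos) (use cpos in auto)
  have "(a*b) ^ r * Z (n - r) a b / Z n a b = (a*b) ^ r / (\<Prod>i<r. a + b + real (m+i) * a * b)"
    unfolding m_def[symmetric] nm Zsplit using Zm by simp
  also have "\<dots> = (\<Prod>i<r. (a*b) / (a + b + real (m+i) * a * b))"
    by (simp add: prod_dividef)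
  also have "\<dots> = (\<Prod>i<r. 1 / (real n + 1/a + 1/b - real r + real (Suc i) - 1))"
  proof (rule prod.cong)
    fix i assume "i \<in> {..<r}"
    have "real n + 1/a + 1/b - real r + real (Suc i) - 1 = real (m+i) + 1/a + 1/b"
      unfolding nm by simp
    also have "\<dots> = (a + b + real (m+i) * a * b) / (a*b)"
      using a b by (simp add: field_simps)
    finally show "(a*b) / (a + b + real (m+i) * a * b) = 1 / (real n + 1/a + 1/b - real r + real (Suc i) - 1)"
      by simp
  qed simp
  also have "\<dots> = (\<Prod>k=1..r. 1 / (real n + 1/a + 1/b - real r + real k - 1))"
    by (rule prod_shift1[symmetric])
  finally show ?thesis .
qed



lemma chain_gap:
  fixes js :: "nat list"
  assumes T: "\<forall>k. k + 1 < length js \<longrightarrow> js ! k + 2 \<le> js ! (k + 1)"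
  shows "l < length js \<Longrightarrow> k < l \<Longrightarrow> js ! k + 2 \<le> js ! (l::nat)"
proof (induction l arbitrary: k)
  case 0 then show ?case by simp
next
  case (Suc l)
  have s: "js ! l + 2 \<le> js ! Suc l" using T Suc.prems(1) by (metis Suc_eq_plus1)
  show ?case
  proof (cases "k = l")
    case True then show ?thesis using s by simp
  next
    case False
    then have "js ! k + 2 \<le> js ! l" using Suc.IH Suc.prems by simp
    then show ?thesis using s by simp
  qed
qed

theorem theorem3p8:
  fixes n :: nat and \<alpha> \<beta> :: real and js :: "nat list"
  assumes "n \<ge> 2" and "\<alpha> > 0" and "\<beta> > 0"
    and "js \<noteq> []"
    and "sorted_wrt (<) js"
    and "\<forall>j\<in>set js. 1 \<le> j \<and> j \<le> n - 1"
  shows "Prob n \<alpha> \<beta> (\<lambda>S. \<forall>k<length js. x_event n (js ! k) S) =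
    (if (\<forall>k. k + 1 < length js \<longrightarrow> js ! k + 2 \<le> js ! (k + 1))
     then (\<Prod>k=1..length js. 1 / (real n + 1/\<alpha> + 1/\<beta> - real (length js) + real k - 1))
     else 0)"
proof -
  have Eeq: "(\<lambda>S. \<forall>k<length js. x_event n (js ! k) S) = (\<lambda>S. \<forall>j\<in>set js. S (n-j, j) \<noteq> Empty)"
    by (rule ext) (simp add: x_event_def all_set_conv_all_nth)
  have P: "Prob n \<alpha> \<beta> (\<lambda>S. \<forall>k<length js. x_event n (js ! k) S) =
      W n \<alpha> \<beta> (\<lambda>S. \<forall>j\<in>set js. S (n-j, j) \<noteq> Empty) / Z n \<alpha> \<beta>"
    unfolding Prob_def W_def Z_def Eeq by simp
  have bnd: "\<forall>j\<in>set js. 1 \<le> j \<and> j < n" using assms(1,6) by fastforce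
  have dist: "distinct js" using assms(5) strict_sorted_iff by blast
  show ?thesis
  proof (cases "\<forall>k. k + 1 < length js \<longrightarrow> js ! k + 2 \<le> js ! (k + 1)")
    case True
    have gap: "\<forall>x\<in>set js. \<forall>y\<in>set js. x < y \<longrightarrow> x + 2 \<le> y"
    proof (intro ballI impI)
      fix x y assume "x \<in> set js" "y \<in> set js" "x < y"
      then obtain k l where k: "k < length js" "x = js ! k" and l: "l < length js" "y = js ! l"
        by (auto simp: in_set_conv_nth)
      have "k < l"
      proof (rule ccontr)
        assume "\<not> k < l"
        then have "l < k \<or> l = k" by auto
        then show False
        proof
          assume "l < k" then have "js ! l < js ! k" using sorted_wrt_nth_less[OF assms(5) _ k(1)] by simp
          then show False using \<open>x < y\<close> k l by simp
        next
          assume "l = k" then show False using \<open>x < y\<close> k l by simp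
        qed
      qed
      then show "x + 2 \<le> y" using chain_gap[OF True l(1) \<open>k < l\<close>] k l by simp
    qed
    have cd: "card (set js) = length js" using distinct_card[OF dist] .
    have "set js \<subseteq> {1..<n}" using bnd by auto
    then have "card (set js) \<le> n - 1" using card_mono[of "{1..<n}" "set js"] by simp
    then have rn: "length js \<le> n" using cd by simp
    have "W n \<alpha> \<beta> (\<lambda>S. \<forall>j\<in>set js. S (n-j, j) \<noteq> Empty) = (\<alpha>*\<beta>) ^ card (set js) * Z (n - card (set js)) \<alpha> \<beta>"
      by (rule events) (use bnd gap in auto)
    then have "Prob n \<alpha> \<beta> (\<lambda>S. \<forall>k<length js. x_event n (js ! k) S) = (\<alpha>*\<beta>) ^ length js * Z (n - length js) \<alpha> \<beta> / Z n \<alpha> \<beta>"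
      using P cd by simp
    also have "\<dots> = (\<Prod>k=1..length js. 1 / (real n + 1/\<alpha> + 1/\<beta> - real (length js) + real k - 1))"
      by (rule ratio[OF assms(2,3) rn])
    finally show ?thesis unfolding if_P[OF True] .
  next
    case False
    then obtain k where k: "k + 1 < length js" "js ! (k+1) < js ! k + 2" by auto
    have "js ! k < js ! (k+1)" using sorted_wrt_nth_less[OF assms(5) _ k(1)] by simp
    then have e: "js ! (k+1) = js ! k + 1" using k(2) by simp
    define j where "j = js ! k"
    have m1: "js ! k \<in> set js" using k(1) by (intro nth_mem) simp
    have m2: "js ! (k+1) \<in> set js" using k(1) by (intro nth_mem) simp
    have jin: "j \<in> set js" "j + 1 \<in> set js" using m1 m2 e unfolding j_def by simp_all
    have j1: "1 \<le> j" and jn: "j + 1 < n" using bnd jin by auto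
    have "W n \<alpha> \<beta> (\<lambda>S. \<forall>j\<in>set js. S (n-j, j) \<noteq> Empty) = 0"
    proof (rule W_false)
      fix S assume S: "S \<in> stair_tableaux n"
      show "\<not> (\<forall>j\<in>set js. S (n-j, j) \<noteq> Empty)"
      proof
        assume h: "\<forall>j\<in>set js. S (n-j, j) \<noteq> Empty"
        define p where "p = n - (j+1)"
        have p1: "1 \<le> p" and pn: "p < n" and np: "n - p = j+1" and p1': "p + 1 = n - j"
          using jn unfolding p_def by auto
        have "S (p, j+1) \<noteq> Empty" unfolding p_def using h jin(2) by blast
        then have "S (p, n-p) \<noteq> Empty" using np by simp
        then have "S (p+1, n-p) = Beta" using X_DR[OF S p1 pn] by simp
        then have B: "S (n-j, j+1) = Beta" unfolding np p1' .
        have "S (n-j, j) = Empty" using ST_beta[OF S B j1] by simp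
        then show False using h jin(1) by simp
      qed
    qed
    then have pz: "Prob n \<alpha> \<beta> (\<lambda>S. \<forall>k<length js. x_event n (js ! k) S) = 0" using P by simp
    show ?thesis unfolding if_not_P[OF False] by (rule pz)
  qed
qed

end
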